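(* Let $a,b$ be integers with $0<a<b$, let $\gamma_1<\gamma_2<\cdots$ be the greedy dissociated sequence starting from $a,b$, and let $n_0(a,b)$ be the least integer such that $\gamma_n=2\gamma_{n-1}$ for all $n\ge n_0(a,b)$. Then $$n_0(a,b)\le L+2K+5,$$ where $L:=\lceil\log_2(2b+2)\rceil$ and $K:=\lceil\log_2 L\rceil$.
   Context: A set $\mathcal S\subseteq\mathbb N$ is dissociated if all of its finite subsets have different sums. The greedy dissociated sequence starting from $a,b$ is defined by $\gamma_1=a$, $\gamma_2=b$, and for $r\ge 3$, $\gamma_r$ is the smallest integer greater than $\gamma_{r-1}$ such that $\{\gamma_1,\dots,\gamma_r\}$ is dissociated. It is known that $\gamma_n=2\gamma_{n-1}$ for all sufficiently large $n$, so $n_0(a,b)$ is well defined. *)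

theory Defs
  imports Complex_Main
begin

definition dissociated :: "nat set \<Rightarrow> bool" where
  "dissociated S \<longleftrightarrow>
     (\<forall>A B. A \<subseteq> S \<and> B \<subseteq> S \<and> finite A \<and> finite B \<and> \<Sum>A = \<Sum>B \<longrightarrow> A = B)"

fun greedy_list :: "nat \<Rightarrow> nat \<Rightarrow> nat \<Rightarrow> nat list" where
  "greedy_list a b 0 = []"
| "greedy_list a b (Suc 0) = [a]"
| "greedy_list a b (Suc (Suc 0)) = [a, b]"
| "greedy_list a b (Suc (Suc (Suc n))) =
     (let xs = greedy_list a b (Suc (Suc n)) in
      xs @ [LEAST x. last xs < x \<and> dissociated (insert x (set xs))])"

text \<open>gamma a b r is the r-th term (1-indexed, r \<ge> 1) of the greedy dissociated sequence.\<close>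
definition gamma :: "nat \<Rightarrow> nat \<Rightarrow> nat \<Rightarrow> nat" where
  "gamma a b r = last (greedy_list a b r)"

text \<open>n_0(a,b): least n0 (with n0 \<ge> 2, so that gamma (n-1) is defined) such that
  gamma n = 2 gamma (n-1) for all n \<ge> n0.\<close>
definition n0 :: "nat \<Rightarrow> nat \<Rightarrow> nat" where
  "n0 a b = (LEAST m. 2 \<le> m \<and> (\<forall>n\<ge>m. gamma a b n = 2 * gamma a b (n - 1)))"

end

theory Submission
  imports Defs
begin

definition diffs :: "nat set \<Rightarrow> int set" where
  "diffs G = {int (\<Sum>A) - int (\<Sum>B) | A B. A \<subseteq> G \<and> B \<subseteq> G}"

lemma diffs_memI: "A \<subseteq> G \<Longrightarrow> B \<subseteq> G \<Longrightarrow> int (\<Sum>A) - int (\<Sum>B) \<in> diffs G"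
  unfolding diffs_def by blast

lemma diffs_memI': "A \<subseteq> G \<Longrightarrow> B \<subseteq> G \<Longrightarrow> e = int (\<Sum>A) - int (\<Sum>B) \<Longrightarrow> e \<in> diffs G"
  using diffs_memI by blast

lemma diffs_mono: "G \<subseteq> H \<Longrightarrow> diffs G \<subseteq> diffs H"
  unfolding diffs_def by force

lemma diffs_insert:
  assumes fin: "finite G" and y: "y \<notin> G"
  shows "diffs (insert y G) = diffs G \<union> (\<lambda>e. e + int y) ` diffs G \<union> (\<lambda>e. e - int y) ` diffs G"
proof
  show "diffs (insert y G) \<subseteq> diffs G \<union> (\<lambda>e. e + int y) ` diffs G \<union> (\<lambda>e. e - int y) ` diffs G"
  proof
    fix e assume "e \<in> diffs (insert y G)"
    then obtain A B where AB: "A \<subseteq> insert y G" "B \<subseteq> insert y G" and e: "e = int (\<Sum>A) - int (\<Sum>B)"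
      unfolding diffs_def by blast
    have fA: "finite A" "finite B" using AB fin finite_subset by auto
    have A': "A - {y} \<subseteq> G" "B - {y} \<subseteq> G" using AB by auto
    have sA: "y \<in> A \<Longrightarrow> \<Sum>A = y + \<Sum>(A - {y})" using fA by (simp add: sum.remove)
    have sB: "y \<in> B \<Longrightarrow> \<Sum>B = y + \<Sum>(B - {y})" using fA by (simp add: sum.remove)
    have dA: "y \<notin> A \<Longrightarrow> A - {y} = A" by auto
    have dB: "y \<notin> B \<Longrightarrow> B - {y} = B" by auto
    define e0 where "e0 = int (\<Sum>(A - {y})) - int (\<Sum>(B - {y}))"
    have e0: "e0 \<in> diffs G" unfolding e0_def using A' by (rule diffs_memI)
    show "e \<in> diffs G \<union> (\<lambda>e. e + int y) ` diffs G \<union> (\<lambda>e. e - int y) ` diffs G"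
    proof (cases "y \<in> A")
      case True
      show ?thesis
      proof (cases "y \<in> B")
        case True
        then have "e = e0" using \<open>y \<in> A\<close> sA sB e e0_def by simp
        then show ?thesis using e0 by simp
      next
        case False
        then have "e = e0 + int y" using \<open>y \<in> A\<close> sA dB e e0_def by simp
        then show ?thesis using e0 by blast
      qed
    next
      case False
      show ?thesis
      proof (cases "y \<in> B")
        case True
        then have "e = e0 - int y" using \<open>y \<notin> A\<close> sB dA e e0_def by simp
        then show ?thesis using e0 by blast
      next
        case False
        then have "e = e0" using \<open>y \<notin> A\<close> dA dB e e0_def by simp
        then show ?thesis using e0 by simp
      qed
    qed
  qed
next
  have 1: "diffs G \<subseteq> diffs (insert y G)" by (rule diffs_mono) blast
  have 2: "e + int y \<in> diffs (insert y G)" if ein: "e \<in> diffs G" for e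
  proof -
    obtain A B where AB: "A \<subseteq> G" "B \<subseteq> G" and e: "e = int (\<Sum>A) - int (\<Sum>B)"
      using ein unfolding diffs_def by blast
    have "finite A" using AB fin finite_subset by auto
    moreover have "y \<notin> A" using AB y by auto
    ultimately have "\<Sum>(insert y A) = y + \<Sum>A" by simp
    then have "e + int y = int (\<Sum>(insert y A)) - int (\<Sum>B)" using e by simp
    moreover have "insert y A \<subseteq> insert y G" "B \<subseteq> insert y G" using AB by auto
    ultimately show ?thesis by (rule diffs_memI'[rotated 2])
  qed
  have 3: "e - int y \<in> diffs (insert y G)" if ein: "e \<in> diffs G" for e
  proof -
    obtain A B where AB: "A \<subseteq> G" "B \<subseteq> G" and e: "e = int (\<Sum>A) - int (\<Sum>B)"
      using ein unfolding diffs_def by blast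
    have "finite B" using AB fin finite_subset by auto
    moreover have "y \<notin> B" using AB y by auto
    ultimately have "\<Sum>(insert y B) = y + \<Sum>B" by simp
    then have "e - int y = int (\<Sum>A) - int (\<Sum>(insert y B))" using e by simp
    moreover have "A \<subseteq> insert y G" "insert y B \<subseteq> insert y G" using AB by auto
    ultimately show ?thesis by (rule diffs_memI'[rotated 2])
  qed
  show "diffs G \<union> (\<lambda>e. e + int y) ` diffs G \<union> (\<lambda>e. e - int y) ` diffs G \<subseteq> diffs (insert y G)"
    using 1 2 3 by blast
qed

lemma diffs_bound:
  assumes "finite G" "e \<in> diffs G" shows "\<bar>e\<bar> \<le> int (\<Sum>G)"
proof -
  obtain A B where AB: "A \<subseteq> G" "B \<subseteq> G" and e: "e = int (\<Sum>A) - int (\<Sum>B)"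
    using assms(2) unfolding diffs_def by blast
  have "\<Sum>A \<le> \<Sum>G" "\<Sum>B \<le> \<Sum>G" using AB assms(1) by (auto intro: sum_mono2)
  then show ?thesis using e by linarith
qed

lemma diffs_zero: "0 \<in> diffs G"
  unfolding diffs_def by force

lemma diffs_mem: "y \<in> G \<Longrightarrow> int y \<in> diffs G"
  unfolding diffs_def by (rule CollectI, rule exI[of _ "{y}"], rule exI[of _ "{}"]) simp

lemma diffs_uminus: "e \<in> diffs G \<Longrightarrow> - e \<in> diffs G"
  unfolding diffs_def by force

lemma dissoc_insert:
  assumes fin: "finite G" and d: "dissociated G" and x: "x \<notin> G"
  shows "dissociated (insert x G) \<longleftrightarrow> int x \<notin> diffs G"
proof
  assume di: "dissociated (insert x G)"
  show "int x \<notin> diffs G"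
  proof
    assume "int x \<in> diffs G"
    then obtain A B where AB: "A \<subseteq> G" "B \<subseteq> G" and e: "int x = int (\<Sum>A) - int (\<Sum>B)"
      unfolding diffs_def by blast
    have fB: "finite A" "finite B" using AB fin finite_subset by auto
    have "x \<notin> B" "x \<notin> A" using AB x by auto
    have "\<Sum>A = x + \<Sum>B" using e by linarith
    then have "\<Sum>(insert x B) = \<Sum>A" using fB \<open>x \<notin> B\<close> by simp
    moreover have "insert x B \<subseteq> insert x G" "A \<subseteq> insert x G" using AB by auto
    ultimately have "insert x B = A" using di fB unfolding dissociated_def by blast
    then show False using \<open>x \<notin> A\<close> by auto
  qed
next
  assume nx: "int x \<notin> diffs G"
  show "dissociated (insert x G)"
    unfolding dissociated_def
  proof (intro allI impI)
    fix A B assume h: "A \<subseteq> insert x G \<and> B \<subseteq> insert x G \<and> finite A \<and> finite B \<and> \<Sum>A = \<Sum>B"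
    have A': "A - {x} \<subseteq> G" "B - {x} \<subseteq> G" using h by auto
    have fin': "finite A" "finite B" using h by auto
    have sA: "x \<in> A \<Longrightarrow> \<Sum>A = x + \<Sum>(A - {x})" using fin' by (simp add: sum.remove)
    have sB: "x \<in> B \<Longrightarrow> \<Sum>B = x + \<Sum>(B - {x})" using fin' by (simp add: sum.remove)
    have dA: "x \<notin> A \<Longrightarrow> A - {x} = A" by auto
    have dB: "x \<notin> B \<Longrightarrow> B - {x} = B" by auto
    have fA': "finite (A - {x})" "finite (B - {x})" using h by auto
    have same: "A - {x} = B - {x}" if "\<Sum>(A - {x}) = \<Sum>(B - {x})"
      using d A' fA' that unfolding dissociated_def by blast
    show "A = B"
    proof (cases "x \<in> A")
      case True
      show ?thesis
      proof (cases "x \<in> B")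
        case True
        then have "A - {x} = B - {x}" using \<open>x \<in> A\<close> sA sB h same by simp
        then show ?thesis using True \<open>x \<in> A\<close> by blast
      next
        case False
        then have "int x = int (\<Sum>B) - int (\<Sum>(A - {x}))" using \<open>x \<in> A\<close> sA h by simp
        moreover have "B \<subseteq> G" using h False by auto
        ultimately have "int x \<in> diffs G" using A' by (intro diffs_memI') auto
        then show ?thesis using nx by simp
      qed
    next
      case False
      show ?thesis
      proof (cases "x \<in> B")
        case True
        then have "int x = int (\<Sum>A) - int (\<Sum>(B - {x}))" using sB h by simp
        moreover have "A \<subseteq> G" using h False by auto
        ultimately have "int x \<in> diffs G" using A' by (intro diffs_memI') auto
        then show ?thesis using nx by simp
      next
        case False
        then show ?thesis using \<open>x \<notin> A\<close> dA dB same h by simp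
      qed
    qed
  qed
qed

lemma count_lemma:
  assumes fin: "finite G" and d: "dissociated G" and x: "0 < x" and nx: "int x \<notin> diffs G"
  shows "2 * 2 ^ card G \<le> \<Sum>G + x + 1"
proof -
  define P where "P = (\<lambda>A. \<Sum>A) ` Pow G"
  have inj: "inj_on (\<lambda>A. \<Sum>A) (Pow G)"
    unfolding inj_on_def using d fin finite_subset unfolding dissociated_def by blast
  have cP: "card P = 2 ^ card G" unfolding P_def using card_image[OF inj] card_Pow[OF fin] by simp
  have fP: "finite P" unfolding P_def using fin by simp
  have Psub: "P \<subseteq> {0..\<Sum>G}" unfolding P_def using fin by (auto intro: sum_mono2)
  define Q where "Q = (\<lambda>p. p + x) ` P"
  have cQ: "card Q = card P" unfolding Q_def by (rule card_image) (simp add: inj_on_def)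
  have fQ: "finite Q" unfolding Q_def using fP by simp
  have Qsub: "Q \<subseteq> {0..\<Sum>G + x}" unfolding Q_def using Psub by auto
  have disj: "P \<inter> Q = {}"
  proof (rule ccontr)
    assume "P \<inter> Q \<noteq> {}"
    then obtain A B where AB: "A \<subseteq> G" "B \<subseteq> G" "\<Sum>A = \<Sum>B + x" unfolding P_def Q_def by auto
    then have "int x = int (\<Sum>A) - int (\<Sum>B)" by linarith
    then have "int x \<in> diffs G" using diffs_memI[OF AB(1,2)] by simp
    then show False using nx by simp
  qed
  have "card (P \<union> Q) = card P + card Q" using card_Un_disjoint[OF fP fQ disj] .
  moreover have "card (P \<union> Q) \<le> card {0..\<Sum>G + x}"
    by (rule card_mono) (use Psub Qsub in auto)
  ultimately show ?thesis using cP cQ by simp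
qed

lemma mem_le_Sum: "finite A \<Longrightarrow> (x::nat) \<in> A \<Longrightarrow> x \<le> \<Sum>A"
  using member_le_sum[of x A "\<lambda>x. x"] by simp

locale gr =
  fixes a b :: nat
  assumes a_pos: "0 < a" and ab: "a < b"
begin

abbreviation g where "g \<equiv> gamma a b"
definition Gs where "Gs r = set (greedy_list a b r)"
definition S where "S r = \<Sum>(Gs r)"
definition E where "E r = diffs (Gs r)"

lemma gl_Suc: "greedy_list a b (Suc r) = greedy_list a b r @ [g (Suc r)]"
proof (cases r)
  case 0 then show ?thesis by (simp add: gamma_def)
next
  case (Suc n)
  then show ?thesis
  proof (cases n)
    case 0 then show ?thesis using Suc by (simp add: gamma_def)
  next
    case (Suc m)
    then show ?thesis using \<open>r = Suc n\<close> by (simp add: gamma_def Let_def)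
  qed
qed

lemma Gs_Suc: "Gs (Suc r) = insert (g (Suc r)) (Gs r)"
  unfolding Gs_def by (simp add: gl_Suc)

lemma Gs_0: "Gs 0 = {}" unfolding Gs_def by simp

lemma fin_Gs: "finite (Gs r)" unfolding Gs_def by simp

lemma g1: "g 1 = a" by (simp add: gamma_def)
lemma g2: "g 2 = b" by (simp add: gamma_def numeral_2_eq_2)

lemma Gs1: "Gs 1 = {a}" using Gs_Suc[of 0] Gs_0 g1 by simp

lemma g_rec: "2 \<le> r \<Longrightarrow> g (Suc r) = (LEAST x. g r < x \<and> dissociated (insert x (Gs r)))"
proof -
  assume "2 \<le> r"
  then obtain m where m: "r = Suc (Suc m)" by (metis add_2_eq_Suc le_Suc_ex)
  show ?thesis unfolding m Gs_def by (simp add: gamma_def Let_def)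
qed

lemma E_bound: "e \<in> E r \<Longrightarrow> \<bar>e\<bar> \<le> int (S r)"
  unfolding E_def S_def using diffs_bound fin_Gs by blast

lemma basic: "1 \<le> r \<Longrightarrow> dissociated (Gs r) \<and> (\<forall>x\<in>Gs r. 0 < x \<and> x \<le> g r) \<and> g r < g (Suc r)"
proof (induction r rule: dec_induct)
  case base
  have d0: "dissociated {}" unfolding dissociated_def by auto
  have "int a \<notin> diffs {}" using diffs_bound[of "{}" "int a"] a_pos by auto
  then have d: "dissociated {a}" using dissoc_insert[OF _ d0, of a] by simp
  show ?case using d Gs1 g1 g2 a_pos ab by (simp add: numeral_2_eq_2)
next
  case (step r)
  have IH: "dissociated (Gs r)" "\<forall>x\<in>Gs r. 0 < x \<and> x \<le> g r" "g r < g (Suc r)" using step.IH by auto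
  have nm: "g (Suc r) \<notin> Gs r" using IH(2,3) by auto
  have fr: "finite (Gs r)" by (rule fin_Gs)
  have dS: "int (g (Suc r)) \<notin> diffs (Gs r)"
  proof (cases "r = 1")
    case True
    have "int b \<notin> diffs {a}" using diffs_bound[of "{a}" "int b"] ab by auto
    then show ?thesis using True Gs1 g2 by (simp add: numeral_2_eq_2)
  next
    case False
    then have r2: "2 \<le> r" using step.hyps by simp
    define w where "w = S r + 1"
    have "g r \<in> Gs r" using Gs_Suc[of "r - 1"] step.hyps by (cases r) auto
    then have "g r \<le> S r" unfolding S_def using fr by (simp add: mem_le_Sum)
    then have wgt: "g r < w" unfolding w_def by simp
    have "int w \<notin> diffs (Gs r)" using diffs_bound[OF fr, of "int w"] unfolding w_def S_def by auto
    moreover have "w \<notin> Gs r" using wgt IH(2) by auto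
    ultimately have "dissociated (insert w (Gs r))"
      using dissoc_insert[OF fr IH(1)] by auto
    then have P: "g r < g (Suc r) \<and> dissociated (insert (g (Suc r)) (Gs r))"
      unfolding g_rec[OF r2] using wgt by (rule_tac LeastI[of _ w]) simp
    then show ?thesis using dissoc_insert[OF fr IH(1) nm] by simp
  qed
  have d: "dissociated (Gs (Suc r))" unfolding Gs_Suc using dissoc_insert[OF fr IH(1) nm] dS by simp
  have el: "\<forall>x\<in>Gs (Suc r). 0 < x \<and> x \<le> g (Suc r)" unfolding Gs_Suc using IH(2,3) by auto
  have lt: "g (Suc r) < g (Suc (Suc r))"
  proof -
    have r2: "2 \<le> Suc r" using step.hyps by simp
    have fr': "finite (Gs (Suc r))" by (rule fin_Gs)
    define w where "w = S (Suc r) + 1"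
    have "g (Suc r) \<in> Gs (Suc r)" unfolding Gs_Suc by simp
    then have "g (Suc r) \<le> S (Suc r)" unfolding S_def using fr' by (simp add: mem_le_Sum)
    then have wgt: "g (Suc r) < w" unfolding w_def by simp
    have "int w \<notin> diffs (Gs (Suc r))" using diffs_bound[OF fr', of "int w"] unfolding w_def S_def by auto
    moreover have "w \<notin> Gs (Suc r)" using el wgt by auto
    ultimately have "dissociated (insert w (Gs (Suc r)))"
      using dissoc_insert[OF fr' d] by auto
    then show ?thesis
      unfolding g_rec[OF r2] using wgt by (rule_tac LeastI2[of _ w]) auto
  qed
  show ?case using d el lt by simp
qed

end

context gr begin

lemma g_lt: "1 \<le> r \<Longrightarrow> g r < g (Suc r)" using basic by blast

lemma g_mono: "1 \<le> i \<Longrightarrow> i < j \<Longrightarrow> g i < g j"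
proof (induction j rule: less_induct)
  case (less j)
  then obtain k where k: "j = Suc k" "i \<le> k" by (cases j) auto
  show ?case
  proof (cases "i = k")
    case True then show ?thesis using g_lt less.prems k by simp
  next
    case False
    then have "g i < g k" using less k by simp
    also have "g k < g j" using g_lt k less.prems by simp
    finally show ?thesis .
  qed
qed

lemma g_pos: "1 \<le> r \<Longrightarrow> 0 < g r" using basic[of r] by (cases r) (auto simp: Gs_Suc)

lemma g_notin: "g (Suc r) \<notin> Gs r"
proof (cases r)
  case 0 then show ?thesis by (simp add: Gs_0)
next
  case (Suc m) then show ?thesis using basic[of r] by auto
qed

lemma Gs_mono: "r \<le> s \<Longrightarrow> Gs r \<subseteq> Gs s"
  by (induction s rule: dec_induct) (auto simp: Gs_Suc)

lemma g_in_Gs: "1 \<le> i \<Longrightarrow> i \<le> r \<Longrightarrow> g i \<in> Gs r"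
  using Gs_mono[of i r] Gs_Suc[of "i - 1"] by (cases i) auto

lemma S_Suc: "S (Suc r) = S r + g (Suc r)"
  unfolding S_def Gs_Suc using fin_Gs g_notin by simp

lemma S1: "S 1 = a" unfolding S_def Gs1 by simp
lemma S2: "S 2 = a + b" using S_Suc[of 1] S1 g2 by (simp add: numeral_2_eq_2)

lemma card_Gs: "card (Gs r) = r"
  by (induction r) (auto simp: Gs_0 Gs_Suc fin_Gs g_notin)

lemma diss: "1 \<le> r \<Longrightarrow> dissociated (Gs r)" using basic by blast

lemma E_Suc: "E (Suc r) = E r \<union> (\<lambda>e. e + int (g (Suc r))) ` E r \<union> (\<lambda>e. e - int (g (Suc r))) ` E r"
  unfolding E_def Gs_Suc using diffs_insert[OF fin_Gs g_notin] .

lemma E_add: "e \<in> E r \<Longrightarrow> e + int (g (Suc r)) \<in> E (Suc r)" using E_Suc by blast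
lemma E_sub: "e \<in> E r \<Longrightarrow> e - int (g (Suc r)) \<in> E (Suc r)" using E_Suc by blast

lemma E_mono: "r \<le> s \<Longrightarrow> E r \<subseteq> E s"
  unfolding E_def by (intro diffs_mono Gs_mono)

lemma E_zero: "0 \<in> E r" unfolding E_def by (rule diffs_zero)
lemma E_uminus: "e \<in> E r \<Longrightarrow> - e \<in> E r" unfolding E_def by (rule diffs_uminus)
lemma E_g: "1 \<le> i \<Longrightarrow> i \<le> r \<Longrightarrow> int (g i) \<in> E r"
  unfolding E_def by (intro diffs_mem g_in_Gs)

lemma E_Suc_cases:
  assumes "e \<in> E (Suc r)"
  shows "e \<in> E r \<or> e - int (g (Suc r)) \<in> E r \<or> e + int (g (Suc r)) \<in> E r"
  using assms unfolding E_Suc by auto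

lemma g_rec2: "2 \<le> r \<Longrightarrow> g (Suc r) = (LEAST x. g r < x \<and> int x \<notin> E r)"
proof -
  assume r: "2 \<le> r"
  have "(\<lambda>x. g r < x \<and> dissociated (insert x (Gs r))) = (\<lambda>x. g r < x \<and> int x \<notin> E r)"
  proof (rule ext)
    fix x
    show "(g r < x \<and> dissociated (insert x (Gs r))) = (g r < x \<and> int x \<notin> E r)"
    proof (cases "g r < x")
      case True
      then have "x \<notin> Gs r" using basic[of r] r by auto
      then show ?thesis using dissoc_insert[OF fin_Gs diss] r True unfolding E_def by auto
    qed simp
  qed
  then show ?thesis using g_rec[OF r] by simp
qed

lemma notE: "1 \<le> r \<Longrightarrow> int (g (Suc r)) \<notin> E r"
  using diss[of "Suc r"] dissoc_insert[OF fin_Gs diss g_notin, of r] unfolding E_def Gs_Suc by simp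

lemma between: "2 \<le> r \<Longrightarrow> g r < y \<Longrightarrow> y < g (Suc r) \<Longrightarrow> int y \<in> E r"
  using not_less_Least[of y "\<lambda>x. g r < x \<and> int x \<notin> E r"] g_rec2 by auto

lemma least_le: "2 \<le> r \<Longrightarrow> g r < x \<Longrightarrow> int x \<notin> E r \<Longrightarrow> g (Suc r) \<le> x"
  using Least_le[of "\<lambda>x. g r < x \<and> int x \<notin> E r" x] g_rec2 by auto

lemma g_le_S: "1 \<le> r \<Longrightarrow> g r \<le> S r"
  unfolding S_def using mem_le_Sum[OF fin_Gs g_in_Gs] by simp

lemma le_S: "2 \<le> r \<Longrightarrow> g (Suc r) \<le> S r + 1"
proof -
  assume r: "2 \<le> r"
  have "int (S r + 1) \<notin> E r" using E_bound[of "int (S r + 1)" r] by auto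
  moreover have "g r < S r + 1" using g_le_S[of r] r by simp
  ultimately show ?thesis using least_le r by blast
qed

lemma count: "1 \<le> r \<Longrightarrow> 0 < x \<Longrightarrow> int x \<notin> E r \<Longrightarrow> 2 * 2 ^ r \<le> S r + x + 1"
  using count_lemma[OF fin_Gs diss, of r x] card_Gs unfolding E_def S_def by simp

end

context gr begin

lemma big_hole: "2 \<le> r \<Longrightarrow> b < x \<Longrightarrow> int x \<notin> E r \<Longrightarrow> g r < x"
proof (induction r rule: dec_induct)
  case base then show ?case using g2 by simp
next
  case (step r)
  have "int x \<notin> E r" using step.prems E_mono[of r "Suc r"] by auto
  then have "g r < x" using step by simp
  then have "g (Suc r) \<le> x" using least_le step.hyps \<open>int x \<notin> E r\<close> by blast
  moreover have "g (Suc r) \<noteq> x" using E_g[of "Suc r" "Suc r"] step.prems by auto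
  ultimately show ?case by simp
qed

lemma incr: "2 \<le> i \<Longrightarrow> i < r \<Longrightarrow> 0 < x \<Longrightarrow> int x \<notin> E r \<Longrightarrow> g (Suc i) < g i + x"
proof (rule ccontr)
  assume i: "2 \<le> i" and ir: "i < r" and x: "0 < x" and nx: "int x \<notin> E r" and c: "\<not> g (Suc i) < g i + x"
  have sub: "E (Suc i) \<subseteq> E r" using E_mono ir by simp
  have gi: "int (g i) \<in> E i" using E_g[of i i] i by simp
  have "int x \<in> E (Suc i)"
  proof (cases "g i + x = g (Suc i)")
    case True
    have "int (g i) - int (g (Suc i)) \<in> E (Suc i)" using E_sub[OF gi] .
    then have "- (int (g i) - int (g (Suc i))) \<in> E (Suc i)" by (rule E_uminus)
    moreover have "int x = - (int (g i) - int (g (Suc i)))" using True by linarith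
    ultimately show ?thesis by simp
  next
    case False
    then have lt: "g i + x < g (Suc i)" using c by simp
    define y where "y = g (Suc i) - x"
    have "g i < y" "y < g (Suc i)" using lt x unfolding y_def by auto
    then have "int y \<in> E i" using between i by blast
    from E_uminus[OF E_sub[OF this]] show ?thesis using lt unfolding y_def by simp
  qed
  then show False using sub nx by blast
qed

lemma small_hole_S:
  assumes j: "2 \<le> j" and x: "0 < x" "x < b" and nx: "int x \<notin> E j"
  shows "2 * S j + b * j \<le> 2 * a + b * j * j"
proof -
  have step1: "g i + b \<le> i * b" if "2 \<le> i" "i \<le> j" for i
    using that
  proof (induction i rule: dec_induct)
    case base then show ?case using g2 by simp
  next
    case (step i)
    have "g (Suc i) < g i + x" using incr[OF step.hyps(1) _ x(1) nx] step by simp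
    then show ?case using step x by simp
  qed
  have step2: "2 * S m + b * m \<le> 2 * a + b * m * m" if "1 \<le> m" "m \<le> j" for m
    using that
  proof (induction m rule: dec_induct)
    case base then show ?case using S1 by simp
  next
    case (step m)
    have h1: "g (Suc m) + b \<le> Suc m * b" using step1[of "Suc m"] step by simp
    have h2: "2 * S m + b * m \<le> 2 * a + b * m * m" using step by simp
    have e1: "b * Suc m * Suc m = b * m * m + 2 * (b * m) + b" by (simp add: algebra_simps)
    have e2: "Suc m * b = b * m + b" by (simp add: algebra_simps)
    have h1': "g (Suc m) \<le> b * m" using h1 e2 by linarith
    have e3: "b * Suc m = b * m + b" by simp
    have A: "2 * S (Suc m) + b * Suc m = 2 * S m + 2 * g (Suc m) + b * m + b"
      using S_Suc[of m] by (simp add: algebra_simps)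
    have B: "2 * a + b * Suc m * Suc m = 2 * a + b * m * m + 2 * (b * m) + b"
      by (simp add: algebra_simps)
    show ?case unfolding A B using h1' h2 by linarith
  qed
  show ?thesis using step2[of j] j by simp
qed

definition NS where "NS r \<longleftrightarrow> (\<forall>x. 0 < x \<longrightarrow> x < g (Suc r) \<longrightarrow> int x \<in> E r)"

lemma NS_double:
  assumes r: "2 \<le> r" and ns: "NS r" and x: "0 < x" "x < 2 * g (Suc r)"
  shows "int x \<in> E (Suc r)"
proof -
  consider "x < g (Suc r)" | "x = g (Suc r)" | "g (Suc r) < x" by linarith
  then show ?thesis
  proof cases
    case 1 then show ?thesis using ns x E_mono[of r "Suc r"] unfolding NS_def by auto
  next
    case 2 then show ?thesis using E_g[of "Suc r" "Suc r"] by simp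
  next
    case 3
    define z where "z = x - g (Suc r)"
    have "0 < z" "z < g (Suc r)" using 3 x unfolding z_def by auto
    then have "int z \<in> E r" using ns unfolding NS_def by auto
    from E_add[OF this] show ?thesis using 3 unfolding z_def by simp
  qed
qed

lemma NS_next:
  assumes r: "2 \<le> r" and ns: "NS r"
  shows "2 * g (Suc r) \<le> g (Suc (Suc r)) \<and> NS (Suc r)"
proof
  have "int (g (Suc (Suc r))) \<notin> E (Suc r)" using notE[of "Suc r"] by simp
  moreover have "0 < g (Suc (Suc r))" using g_pos by simp
  ultimately show "2 * g (Suc r) \<le> g (Suc (Suc r))" using NS_double[OF r ns] by (meson not_le)
  show "NS (Suc r)" unfolding NS_def
  proof (intro allI impI)
    fix x assume x: "0 < x" "x < g (Suc (Suc r))"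
    consider "x < g (Suc r)" | "x = g (Suc r)" | "g (Suc r) < x" by linarith
    then show "int x \<in> E (Suc r)"
    proof cases
      case 1 then show ?thesis using ns x E_mono[of r "Suc r"] unfolding NS_def by auto
    next
      case 2 then show ?thesis using E_g[of "Suc r" "Suc r"] by simp
    next
      case 3 then show ?thesis using between[of "Suc r" x] r x by simp
    qed
  qed
qed

lemma NS_mono: "2 \<le> k \<Longrightarrow> NS k \<Longrightarrow> k \<le> m \<Longrightarrow> NS m"
proof -
  assume k: "2 \<le> k" and ns: "NS k" and km: "k \<le> m"
  show "NS m" using km
  proof (induction m rule: dec_induct)
    case base then show ?case using ns .
  next
    case (step m) then show ?case using NS_next k by simp
  qed
qed

lemma chain: "2 \<le> k \<Longrightarrow> NS k \<Longrightarrow> k \<le> m \<Longrightarrow> S m + g (Suc k) \<le> S k + g (Suc m)"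
proof -
  assume k: "2 \<le> k" and ns: "NS k" and km: "k \<le> m"
  show ?thesis using km
  proof (induction m rule: dec_induct)
    case base then show ?case by simp
  next
    case (step m)
    have "NS m" using NS_mono[OF k ns step.hyps(1)] .
    then have "2 * g (Suc m) \<le> g (Suc (Suc m))" using NS_next k step.hyps by simp
    then show ?case using step S_Suc[of m] by simp
  qed
qed

lemma small_of_notNS:
  assumes r: "2 \<le> r" and nns: "\<not> NS r"
  shows "\<exists>x. 0 < x \<and> x < b \<and> int x \<notin> E r"
proof -
  obtain x where x: "0 < x" "x < g (Suc r)" "int x \<notin> E r" using nns unfolding NS_def by auto
  have "x \<noteq> b" using E_g[of 2 r] r g2 x(3) by auto
  moreover have "\<not> b < x"
  proof
    assume "b < x"
    then have "g r < x" using big_hole r x(3) by blast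
    then show False using between r x by blast
  qed
  ultimately show ?thesis using x by auto
qed

definition Stab where "Stab r \<longleftrightarrow> (\<forall>x. 0 < x \<longrightarrow> 2 * x \<le> S r + 1 \<longrightarrow> int x \<in> E r)"

lemma Stab_next:
  assumes r: "3 \<le> r" and st: "Stab r"
  shows "g (Suc (Suc r)) = 2 * g (Suc r) \<and> Stab (Suc r)"
proof -
  have r2: "2 \<le> r" using r by simp
  have "g (Suc (r - 1)) \<le> S (r - 1) + 1" using le_S[of "r - 1"] r by simp
  moreover have "S r = S (r - 1) + g r" using S_Suc[of "r - 1"] r by simp
  ultimately have gr: "2 * g r \<le> S r + 1" using r by simp
  have ns: "NS r" unfolding NS_def
  proof (intro allI impI)
    fix x assume x: "0 < x" "x < g (Suc r)"
    show "int x \<in> E r"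
    proof (cases "2 * x \<le> S r + 1")
      case True then show ?thesis using st x unfolding Stab_def by auto
    next
      case False
      then have "g r < x" using gr by simp
      then show ?thesis using between r2 x by blast
    qed
  qed
  define y where "y = g (Suc r)"
  have ypos: "0 < y" unfolding y_def using g_pos by simp
  have ny: "int y \<notin> E r" unfolding y_def using notE r by simp
  have y2: "S r + 1 < 2 * y"
  proof (rule ccontr)
    assume "\<not> S r + 1 < 2 * y"
    then have "2 * y \<le> S r + 1" by simp
    then have "int y \<in> E r" using st ypos unfolding Stab_def by blast
    with ny show False by simp
  qed
  have le1: "2 * y \<le> g (Suc (Suc r))" using NS_next[OF r2 ns] unfolding y_def by simp
  have n2y: "int (2 * y) \<notin> E (Suc r)"
  proof
    assume "int (2 * y) \<in> E (Suc r)"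
    then have "int (2 * y) \<in> E r \<or> int (2 * y) - int y \<in> E r \<or> int (2 * y) + int y \<in> E r"
      using E_Suc_cases unfolding y_def by blast
    moreover have "int (2 * y) \<notin> E r" using E_bound[of "int (2 * y)" r] y2 by auto
    moreover have "int (2 * y) + int y \<notin> E r" using E_bound[of "int (2 * y) + int y" r] y2 by auto
    moreover have "int (2 * y) - int y = int y" by simp
    ultimately show False using ny by simp
  qed
  have le2: "g (Suc (Suc r)) \<le> 2 * y"
    using least_le[of "Suc r" "2 * y"] r2 n2y ypos unfolding y_def by simp
  have st2: "Stab (Suc r)" unfolding Stab_def
  proof (intro allI impI)
    fix x assume x: "0 < x" "2 * x \<le> S (Suc r) + 1"
    then have "x < 2 * g (Suc r)" using S_Suc[of r] y2 unfolding y_def by simp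
    then show "int x \<in> E (Suc r)" using NS_double[OF r2 ns x(1)] by simp
  qed
  show ?thesis using le1 le2 st2 unfolding y_def by simp
qed

lemma Stab_all: "3 \<le> R \<Longrightarrow> Stab R \<Longrightarrow> R \<le> r \<Longrightarrow> Stab r \<and> g (Suc (Suc r)) = 2 * g (Suc r)"
proof -
  assume R: "3 \<le> R" and st: "Stab R" and Rr: "R \<le> r"
  have "Stab r" using Rr
  proof (induction r rule: dec_induct)
    case base then show ?case using st .
  next
    case (step m) then show ?case using Stab_next R by simp
  qed
  then show ?thesis using Stab_next R Rr by simp
qed

end

context gr begin

lemma main_bound:
  assumes R: "3 \<le> R" and nst: "\<not> Stab R"
  shows "2 * 2 ^ R \<le> 3 * b * (R * R + 2)"
proof -
  obtain x where x: "0 < x" "2 * x \<le> S R + 1" "int x \<notin> E R" using nst unfolding Stab_def by auto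
  have cnt: "2 * 2 ^ R \<le> S R + x + 1" using count[of R x] R x by simp
  have ab1: "a + 1 \<le> b" using ab by simp
  have eR: "3 * b * (R * R + 2) = 3 * (b * R * R) + 6 * b" by (simp add: algebra_simps)
  show ?thesis
  proof (cases "NS R")
    case False
    obtain x' where x': "0 < x'" "x' < b" "int x' \<notin> E R" using small_of_notNS[OF _ False] R by auto
    have "2 * S R + b * R \<le> 2 * a + b * R * R" using small_hole_S[OF _ x'] R by simp
    then show ?thesis using cnt x(2) ab1 eR by linarith
  next
    case True
    define k where "k = (LEAST k. 2 \<le> k \<and> NS k)"
    have kP: "2 \<le> k \<and> NS k" unfolding k_def by (rule LeastI[of _ R]) (use R True in simp)
    have kR: "k \<le> R" unfolding k_def by (rule Least_le) (use R True in simp)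
    have xg: "g (Suc R) \<le> x"
    proof (rule ccontr)
      assume "\<not> g (Suc R) \<le> x"
      then have "int x \<in> E R" using True x(1) unfolding NS_def by simp
      then show False using x(3) by simp
    qed
    have ch: "S R + g (Suc k) \<le> S k + g (Suc R)" using chain kP kR by blast
    have gk: "0 < g (Suc k)" using g_pos by simp
    have SRk: "S R + 1 \<le> 2 * S k" using ch gk xg x(2) by linarith
    have four: "4 * 2 ^ R \<le> 6 * S k" using cnt x(2) SRk by linarith
    show ?thesis
    proof (cases "k = 2")
      case True
      then have "4 * 2 ^ R \<le> 6 * a + 6 * b" using four S2 by simp
      then have "2 * 2 ^ R \<le> 6 * b" using ab1 by linarith
      also have "\<dots> = 3 * b * 2" by simp
      also have "\<dots> \<le> 3 * b * (R * R + 2)" by (rule mult_le_mono2) simp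
      finally show ?thesis .
    next
      case False
      define j where "j = k - 1"
      have j2: "2 \<le> j" and kj: "k = Suc j" using False kP unfolding j_def by auto
      have "\<not> NS j"
      proof
        assume "NS j"
        then have "k \<le> j" unfolding k_def by (rule_tac Least_le) (use j2 in simp)
        then show False using kj by simp
      qed
      then obtain x' where x': "0 < x'" "x' < b" "int x' \<notin> E j" using small_of_notNS j2 by blast
      have sj: "2 * S j + b * j \<le> 2 * a + b * j * j" using small_hole_S[OF j2 x'] .
      have Sk: "S k \<le> 2 * S j + 1" using S_Suc[of j] le_S[OF j2] kj by simp
      have jR: "j \<le> R" using kR kj by simp
      have "b * j * j \<le> b * R * R" using jR by (simp add: mult_le_mono)
      then show ?thesis using four Sk sj ab1 eR by linarith
    qed
  qed
qed

end

lemma two_K: "2 * K \<le> (2::nat) ^ K"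
proof (induction K)
  case 0 then show ?case by simp
next
  case (Suc K)
  then show ?case
  proof (cases "K = 0")
    case True then show ?thesis by simp
  next
    case False
    then have "(2::nat) \<le> 2 ^ K" using power_increasing[of 1 K "2::nat"] by simp
    then show ?thesis using Suc by simp
  qed
qed

lemma final_arith:
  fixes b L K :: nat
  assumes hL: "2 * b + 2 \<le> 2 ^ L" and hK: "L \<le> 2 ^ K" and K2: "2 \<le> K"
  shows "3 * b * ((L + 2 * K + 3) * (L + 2 * K + 3) + 2) < 2 * 2 ^ (L + 2 * K + 3)"
proof -
  define u :: nat where "u = 2 ^ K"
  have u4: "4 \<le> u" unfolding u_def using power_increasing[OF K2, of "2::nat"] by simp
  define R where "R = L + 2 * K + 3"
  have Ru: "R \<le> 2 * u + 3" unfolding R_def u_def using hK two_K[of K] by simp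
  have "R * R \<le> (2 * u + 3) * (2 * u + 3)" using Ru by (simp add: mult_le_mono)
  also have "\<dots> = 4 * (u * u) + 12 * u + 9" by (simp add: algebra_simps)
  finally have RR: "R * R \<le> 4 * (u * u) + 12 * u + 9" .
  have "16 * u \<le> 4 * (u * u)" using u4 by (simp add: mult_le_mono)
  then have R8: "R * R + 2 \<le> 8 * (u * u)" using RR u4 by linarith
  have uu: "(2::nat) ^ (2 * K) = u * u" unfolding u_def by (simp add: power_even_eq power2_eq_square)
  have p: "(2::nat) ^ R = 2 ^ L * (8 * (u * u))"
    unfolding R_def power_add uu by simp
  have "3 * b * (R * R + 2) \<le> 3 * b * (8 * (u * u))" using R8 by (rule mult_le_mono2)
  also have "\<dots> < (2 * b + 2) * (16 * (u * u))" using u4 by (simp add: algebra_simps)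
  also have "\<dots> \<le> 2 ^ L * (16 * (u * u))" using hL by (rule mult_le_mono1)
  also have "\<dots> = 2 * 2 ^ R" using p by simp
  finally show ?thesis unfolding R_def .
qed

lemma ceil_log2: "(0::real) < y \<Longrightarrow> y \<le> 2 ^ nat \<lceil>log 2 y\<rceil>"
proof -
  assume y: "0 < y"
  have "log 2 y \<le> real (nat \<lceil>log 2 y\<rceil>)" by (rule real_nat_ceiling_ge)
  then have "2 powr log 2 y \<le> 2 powr real (nat \<lceil>log 2 y\<rceil>)" by simp
  then show ?thesis using y by (simp add: powr_realpow)
qed

theorem corollary1:
  fixes a b :: nat
  assumes "0 < a" and "a < b"
  defines "L \<equiv> nat \<lceil>log 2 (2 * real b + 2)\<rceil>"
  defines "K \<equiv> nat \<lceil>log 2 (real L)\<rceil>"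
  shows "n0 a b \<le> L + 2 * K + 5"
proof -
  interpret gr a b using assms(1,2) by unfold_locales
  have hL: "2 * b + 2 \<le> 2 ^ L"
  proof -
    have "2 * real b + 2 \<le> 2 ^ L" unfolding L_def by (rule ceil_log2) simp
    then have "real (2 * b + 2) \<le> real (2 ^ L)" by simp
    then show ?thesis by (simp only: of_nat_le_iff)
  qed
  have L3: "3 \<le> L"
  proof (rule ccontr)
    assume "\<not> 3 \<le> L" then have "L \<le> 2" by simp
    then have "(2::nat) ^ L \<le> 2 ^ 2" by (rule power_increasing) simp
    then show False using hL assms(1,2) by simp
  qed
  have hK: "L \<le> 2 ^ K"
  proof -
    have "real L \<le> 2 ^ K" unfolding K_def by (rule ceil_log2) (use L3 in simp)
    then have "real L \<le> real (2 ^ K)" by simp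
    then show ?thesis by (simp only: of_nat_le_iff)
  qed
  have K2: "2 \<le> K"
  proof (rule ccontr)
    assume "\<not> 2 \<le> K" then have "K \<le> 1" by simp
    then have "(2::nat) ^ K \<le> 2 ^ 1" by (rule power_increasing) simp
    then show False using hK L3 by simp
  qed
  define R where "R = L + 2 * K + 3"
  have R3: "3 \<le> R" unfolding R_def by simp
  have st: "Stab R"
  proof (rule ccontr)
    assume "\<not> Stab R"
    then have "2 * 2 ^ R \<le> 3 * b * (R * R + 2)" using main_bound R3 by blast
    moreover have "3 * b * (R * R + 2) < 2 * 2 ^ R" unfolding R_def using final_arith[OF hL hK K2] .
    ultimately show False by simp
  qed
  have P0: "2 \<le> R + 2 \<and> (\<forall>n \<ge> R + 2. gamma a b n = 2 * gamma a b (n - 1))"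
  proof (intro conjI allI impI)
    show "2 \<le> R + 2" by simp
    fix n assume n: "R + 2 \<le> n"
    define r where "r = n - 2"
    have nr: "n = Suc (Suc r)" "R \<le> r" using n unfolding r_def by auto
    have "g (Suc (Suc r)) = 2 * g (Suc r)" using Stab_all[OF R3 st nr(2)] by simp
    then show "gamma a b n = 2 * gamma a b (n - 1)" using nr(1) by simp
  qed
  have "n0 a b \<le> R + 2" unfolding n0_def by (rule Least_le) (rule P0)
  then show ?thesis unfolding R_def by simp
qed

end
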